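(* Let $C>1$ and let $P$ be a probability measure on $[0,\infty)$ with mean $\mu_P\in[0,\infty]$. Then: (1) $G_{P,C}$ is continuous and concave on $[0,\infty)$; (2) $\sup_{\mu\ge0}G_{P,C}(\mu)=G_{P,C}\big(\tfrac1C m_{P}\big)$; (3) $\tfrac1C m_P\le\mu_{P,C}\le\mu_P$.
   Context: For $\mu\ge0$ define $G_{P,C}(\mu):=\mathbb{E}_{t\sim P}[\min\{t,C\mu\}]-\mu$. The $C$-clipped mean $\mu_{P,C}$ is the largest $\mu\ge0$ with $G_{P,C}(\mu)=0$ (note $G_{P,C}(0)=0$). The $\frac1C$-median is $m_P:=\sup\{M\ge0:\mathbb{P}_{t\sim P}[t\ge M]\ge\frac1C\}$ (so $\mathbb{P}_{t\sim P}[t\ge m_P]\ge\frac1C$). *)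

theory Defs
  imports "HOL-Probability.Probability"
begin

definition clipG :: "real measure \<Rightarrow> real \<Rightarrow> real \<Rightarrow> real" where
  "clipG P C \<mu> = (\<integral>t. min t (C * \<mu>) \<partial>P) - \<mu>"

definition clipped_mean :: "real measure \<Rightarrow> real \<Rightarrow> real" where
  "clipped_mean P C = (GREATEST \<mu>. \<mu> \<ge> 0 \<and> clipG P C \<mu> = 0)"

definition inv_C_median :: "real measure \<Rightarrow> real \<Rightarrow> real" where
  "inv_C_median P C = Sup {M. M \<ge> 0 \<and> measure P {t \<in> space P. t \<ge> M} \<ge> 1 / C}"

definition mean_ennreal :: "real measure \<Rightarrow> ennreal" where
  "mean_ennreal P = (\<integral>\<^sup>+ t. ennreal t \<partial>P)"

end

theory Submission
  imports Defs
begin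

locale clipctx = prob_space P for P :: "real measure" +
  fixes C :: real
  assumes C1: "C > 1" and sP: "sets P = sets borel" and nn: "AE t in P. t \<ge> 0"
begin

lemma spaceP: "space P = UNIV"
  using sets_eq_imp_space_eq[OF sP] by simp

lemma meas_borel: "(g :: real \<Rightarrow> real) \<in> borel_measurable borel \<Longrightarrow> g \<in> borel_measurable P"
  using measurable_cong_sets[OF sP refl, of borel] by metis

lemma probU: "prob UNIV = 1" using prob_space spaceP by simp

lemma sets_ev: "A \<in> sets borel \<Longrightarrow> A \<in> sets P" using sP by simp

lemma meas_min: "(\<lambda>t. min t a) \<in> borel_measurable P"
  by (rule meas_borel) measurable

lemma integ_min: "integrable P (\<lambda>t. min t a)"
proof (rule integrable_const_bound[where B="\<bar>a\<bar>"])
  show "AE t in P. norm (min t a) \<le> \<bar>a\<bar>" using nn by eventually_elim auto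
qed (rule meas_min)

lemma integ_ind: "A \<in> sets borel \<Longrightarrow> integrable P (indicator A :: real \<Rightarrow> real)"
  by (rule integrable_const_bound[where B=1]) (auto simp: sets_ev split: split_indicator intro!: meas_borel borel_measurable_indicator)

lemma G_le: "clipG P C x \<le> clipG P C y + (C + 1) * \<bar>x - y\<bar>"
proof -
  have "(\<integral>t. min t (C*x) \<partial>P) \<le> (\<integral>t. min t (C*y) + C * \<bar>x - y\<bar> \<partial>P)"
  proof (rule integral_mono)
    fix t show "min t (C*x) \<le> min t (C*y) + C * \<bar>x - y\<bar>"
      using C1 by (auto simp: min_def abs_if algebra_simps) (smt (verit) mult_le_cancel_left)+
  qed (auto intro!: integ_min)
  also have "\<dots> = (\<integral>t. min t (C*y) \<partial>P) + C * \<bar>x - y\<bar>"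
    by (subst Bochner_Integration.integral_add) (auto intro!: integ_min simp: prob_space)
  finally show ?thesis unfolding clipG_def using C1 by (auto simp: algebra_simps abs_if)
qed

lemma G_lip: "dist (clipG P C x) (clipG P C y) \<le> (C + 1) * dist x y"
  using G_le[of x y] G_le[of y x] by (auto simp: dist_real_def abs_minus_commute)

lemma G_cont: "continuous_on S (clipG P C)"
proof (rule lipschitz_on_continuous_on)
  show "(C+1)-lipschitz_on S (clipG P C)"
    unfolding lipschitz_on_def using C1 G_lip by auto
qed

lemma G_concave: "concave_on {0..} (clipG P C)"
  unfolding concave_on_iff
proof (intro conjI ballI allI impI)
  fix x y u v :: real assume uv: "u \<ge> 0" "v \<ge> 0" "u + v = 1"
  have "(\<integral>t. u * min t (C*x) + v * min t (C*y) \<partial>P) \<le> (\<integral>t. min t (C * (u * x + v * y)) \<partial>P)"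
  proof (rule integral_mono)
    fix t
    have "u * min t (C*x) \<le> u * t" "v * min t (C*y) \<le> v * t"
      using uv by (auto intro: mult_left_mono)
    moreover have "u * min t (C*x) \<le> u * (C*x)" "v * min t (C*y) \<le> v * (C*y)"
      using uv by (auto intro: mult_left_mono)
    ultimately have "u * min t (C*x) + v * min t (C*y) \<le> (u + v) * t"
      "u * min t (C*x) + v * min t (C*y) \<le> C * (u * x + v * y)"
      by (simp_all add: algebra_simps)
    thus "u * min t (C*x) + v * min t (C*y) \<le> min t (C * (u * x + v * y))"
      using uv by simp
  qed (auto intro!: integ_min)
  also have "(\<integral>t. u * min t (C*x) + v * min t (C*y) \<partial>P) = u * (\<integral>t. min t (C*x) \<partial>P) + v * (\<integral>t. min t (C*y) \<partial>P)"
    by (subst Bochner_Integration.integral_add) (auto intro!: integ_min)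
  finally show "u * clipG P C x + v * clipG P C y \<le> clipG P C (u *\<^sub>R x + v *\<^sub>R y)"
    unfolding clipG_def using uv by (simp add: algebra_simps)
qed simp

lemma G0: "clipG P C 0 = 0"
proof -
  have "(\<integral>t. min t (C*0) \<partial>P) = (\<integral>t. 0 \<partial>P)"
    by (rule integral_cong_AE) (use nn in \<open>auto intro!: meas_min\<close>)
  thus ?thesis by (simp add: clipG_def)
qed

definition "Ms = {M. M \<ge> 0 \<and> measure P {t \<in> space P. t \<ge> M} \<ge> 1 / C}"

lemma sets_ge[simp]: "{t. (a::real) \<le> t} \<in> sets P" "{t. (a::real) < t} \<in> sets P"
  by (auto intro!: sets_ev)

lemma exK: "\<exists>K\<ge>0. prob {t. t \<ge> K} < 1/C"
proof -
  define A where "A n = {t::real. t \<ge> real n}" for n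
  have "(\<lambda>n. measure P (A n)) \<longlonglongrightarrow> measure P (\<Inter>i. A i)"
    by (rule finite_Lim_measure_decseq) (auto simp: A_def decseq_def)
  moreover have "(\<Inter>i. A i) = {}"
  proof (safe)
    fix t assume "t \<in> (\<Inter>i. A i)"
    moreover obtain n where "t < real n" using reals_Archimedean2 by blast
    ultimately show "t \<in> {}" by (auto simp: A_def not_le[symmetric])
  qed
  ultimately have "(\<lambda>n. measure P (A n)) \<longlonglongrightarrow> 0" by simp
  moreover have "0 < 1 / C" using C1 by simp
  ultimately have "eventually (\<lambda>n. measure P (A n) < 1 / C) sequentially"
    by (rule order_tendstoD(2))
  then obtain n where "measure P (A n) < 1 / C" by (auto simp: eventually_sequentially)
  thus ?thesis by (intro exI[of _ "real n"]) (auto simp: A_def)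
qed

lemma Ms_iff: "M \<in> Ms \<longleftrightarrow> M \<ge> 0 \<and> prob {t. t \<ge> M} \<ge> 1 / C"
  by (simp add: Ms_def spaceP)

lemma Ms0: "0 \<in> Ms"
proof -
  have "prob {t \<in> space P. t \<ge> 0} = 1"
    using prob_Collect_eq_1[of "\<lambda>t. t \<ge> 0"] nn by (simp add: spaceP)
  thus ?thesis using C1 by (simp add: Ms_def)
qed

lemma Ms_bdd: "bdd_above Ms"
proof -
  obtain K where K: "K \<ge> 0" "prob {t. t \<ge> K} < 1/C" using exK by blast
  have "M \<le> K" if "M \<in> Ms" for M
  proof (rule ccontr)
    assume "\<not> M \<le> K"
    hence "prob {t. t \<ge> M} \<le> prob {t. t \<ge> K}"
      by (intro finite_measure_mono) auto
    thus False using that K by (auto simp: Ms_iff)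
  qed
  thus ?thesis by (auto simp: bdd_above_def)
qed

definition "m = Sup Ms"

lemma m_eq: "inv_C_median P C = m"
  by (simp add: inv_C_median_def m_def Ms_def)

lemma m_nonneg: "m \<ge> 0"
  unfolding m_def using Ms0 Ms_bdd by (rule cSup_upper)

lemma below_m: "M < m \<Longrightarrow> prob {t. t \<ge> M} \<ge> 1 / C"
proof -
  assume "M < m"
  then obtain M' where M': "M' \<in> Ms" "M < M'"
    using less_cSup_iff[of Ms M] Ms0 Ms_bdd unfolding m_def by blast
  have "prob {t. t \<ge> M'} \<le> prob {t. t \<ge> M}"
    using M' by (intro finite_measure_mono) auto
  thus ?thesis using M' by (auto simp: Ms_iff)
qed

lemma inv_Suc_mono: "(a::nat) \<le> b \<Longrightarrow> 1 / real (Suc b) \<le> 1 / real (Suc a)"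
  by (simp add: frac_le)

lemma m_ge: "prob {t. t \<ge> m} \<ge> 1 / C"
proof -
  define A where "A n = {t::real. t \<ge> m - 1 / Suc n}" for n
  have "(\<lambda>n. measure P (A n)) \<longlonglongrightarrow> measure P (\<Inter>i. A i)"
    by (rule finite_Lim_measure_decseq)
       (auto simp: A_def decseq_def intro: order.trans[rotated] dest!: inv_Suc_mono)
  moreover have "(\<Inter>i. A i) = {t. t \<ge> m}"
  proof (safe)
    fix t assume "t \<in> (\<Inter>i. A i)"
    show "m \<le> t"
    proof (rule ccontr)
      assume "\<not> m \<le> t"
      then obtain n where "1 / real (Suc n) < m - t"
        using reals_Archimedean[of "m - t"] by (auto simp: inverse_eq_divide)
      moreover have "t \<ge> m - 1 / Suc n" using \<open>t \<in> (\<Inter>i. A i)\<close> by (auto simp: A_def)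
      ultimately show False by linarith
    qed
  qed (auto simp: A_def intro: order.trans[rotated])
  ultimately have "(\<lambda>n. measure P (A n)) \<longlonglongrightarrow> prob {t. t \<ge> m}" by simp
  moreover have "\<forall>n. 1 / C \<le> measure P (A n)"
    unfolding A_def by (auto intro!: below_m)
  ultimately show ?thesis by (intro LIMSEQ_le_const) auto
qed

lemma m_gt: "prob {t. t > m} \<le> 1 / C"
proof -
  define A where "A n = {t::real. t \<ge> m + 1 / Suc n}" for n
  have "(\<lambda>n. measure P (A n)) \<longlonglongrightarrow> measure P (\<Union>i. A i)"
    by (rule finite_Lim_measure_incseq)
       (auto simp: A_def incseq_def intro: order.trans[rotated] dest!: inv_Suc_mono)
  moreover have "(\<Union>i. A i) = {t. t > m}"
  proof (safe)
    fix t assume "m < t"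
    then obtain n where "1 / real (Suc n) < t - m"
      using reals_Archimedean[of "t - m"] by (auto simp: inverse_eq_divide)
    hence "t \<in> A n" by (simp add: A_def)
    thus "t \<in> (\<Union>i. A i)" by blast
  qed (auto simp: A_def intro: order.strict_trans2[rotated])
  ultimately have "(\<lambda>n. measure P (A n)) \<longlonglongrightarrow> prob {t. t > m}" by simp
  moreover have "measure P (A n) \<le> 1 / C" for n
  proof -
    have "m + 1 / Suc n \<notin> Ms"
      using cSup_upper[OF _ Ms_bdd, of "m + 1 / Suc n"] unfolding m_def[symmetric] by auto
    thus ?thesis using m_nonneg by (auto simp: Ms_iff A_def)
  qed
  ultimately show ?thesis by (intro LIMSEQ_le_const2) auto
qed

lemma int_split: "A \<in> sets borel \<Longrightarrow>
  (\<integral>t. min t a + c * indicator A t \<partial>P) = (\<integral>t. min t a \<partial>P) + c * prob A"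
  by (subst Bochner_Integration.integral_add) (auto intro!: integ_min integ_ind simp: spaceP)

lemma G_le_max: "clipG P C \<mu> \<le> clipG P C (m / C)"
proof (cases "C * \<mu> \<ge> m")
  case True
  have "(\<integral>t. min t (C*\<mu>) \<partial>P) \<le> (\<integral>t. min t m + (C*\<mu> - m) * indicator {t. m < t} t \<partial>P)"
  proof (rule integral_mono)
    fix t show "min t (C*\<mu>) \<le> min t m + (C*\<mu> - m) * indicator {t. m < t} t"
      using True by (auto simp: indicator_def)
  qed (auto intro!: integ_min integ_ind Bochner_Integration.integrable_add)
  also have "\<dots> = (\<integral>t. min t m \<partial>P) + (C*\<mu> - m) * prob {t. m < t}"
    by (rule int_split) simp
  also have "(C*\<mu> - m) * prob {t. m < t} \<le> (C*\<mu> - m) * (1 / C)"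
    using True m_gt by (intro mult_left_mono) auto
  also have "\<dots> = \<mu> - m / C" using C1 by (simp add: field_simps)
  finally show ?thesis using C1 by (simp add: clipG_def)
next
  case False
  have "(\<integral>t. min t (C*\<mu>) + (m - C*\<mu>) * indicator {t. m \<le> t} t \<partial>P) \<le> (\<integral>t. min t m \<partial>P)"
  proof (rule integral_mono)
    fix t show "min t (C*\<mu>) + (m - C*\<mu>) * indicator {t. m \<le> t} t \<le> min t m"
      using False by (auto simp: indicator_def)
  qed (auto intro!: integ_min integ_ind Bochner_Integration.integrable_add)
  moreover have "(\<integral>t. min t (C*\<mu>) + (m - C*\<mu>) * indicator {t. m \<le> t} t \<partial>P) = 
     (\<integral>t. min t (C*\<mu>) \<partial>P) + (m - C*\<mu>) * prob {t. m \<le> t}"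
    by (rule int_split) simp
  moreover have "(m - C*\<mu>) * (1 / C) \<le> (m - C*\<mu>) * prob {t. m \<le> t}"
    using False m_ge by (intro mult_left_mono) auto
  moreover have "(m - C*\<mu>) * (1 / C) = m / C - \<mu>" using C1 by (simp add: field_simps)
  ultimately show ?thesis using C1 by (simp add: clipG_def)
qed

lemma sup_eq: "(SUP \<mu>\<in>{0..}. clipG P C \<mu>) = clipG P C (m / C)"
  by (rule cSup_eq_maximum) (use m_nonneg C1 G_le_max in auto)

lemma G_upper: 
  obtains K p where "K \<ge> 0" "C * p < 1" "\<And>\<mu>. \<mu> \<ge> 0 \<Longrightarrow> clipG P C \<mu> \<le> K - (1 - C * p) * \<mu>"
proof -
  obtain K where K: "K \<ge> 0" "prob {t. t \<ge> K} < 1/C" using exK by blast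
  define p where "p = prob {t. K \<le> t}"
  have "C * p < 1" using K C1 by (simp add: p_def field_simps)
  moreover have "clipG P C \<mu> \<le> K - (1 - C * p) * \<mu>" if "\<mu> \<ge> 0" for \<mu>
  proof -
    have "(\<integral>t. min t (C*\<mu>) \<partial>P) \<le> (\<integral>t. min t 0 + K + (C*\<mu>) * indicator {t. K \<le> t} t \<partial>P)"
    proof (rule integral_mono)
      fix t show "min t (C*\<mu>) \<le> min t 0 + K + (C*\<mu>) * indicator {t. K \<le> t} t"
        using that K(1) C1 by (auto simp: indicator_def min_def)
    qed (auto intro!: integ_min integ_ind Bochner_Integration.integrable_add)
    also have "\<dots> = (\<integral>t. min t 0 \<partial>P) + K + C*\<mu>*p"
      by (subst Bochner_Integration.integral_add; (subst Bochner_Integration.integral_add)?)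
         (auto intro!: integ_min integ_ind Bochner_Integration.integrable_add simp: spaceP p_def probU)
    also have "(\<integral>t. min t 0 \<partial>P) = 0" using G0 by (simp add: clipG_def)
    finally show ?thesis by (simp add: clipG_def algebra_simps)
  qed
  ultimately show ?thesis using K(1) that by blast
qed

lemma cm: "m / C \<le> clipped_mean P C \<and> clipG P C (clipped_mean P C) = 0 \<and> clipped_mean P C \<ge> 0"
proof -
  obtain K p where Kp: "K \<ge> 0" "C * p < 1" "\<And>\<mu>. \<mu> \<ge> 0 \<Longrightarrow> clipG P C \<mu> \<le> K - (1 - C * p) * \<mu>"
    using G_upper by metis
  define S where "S = {x \<in> {0..}. clipG P C x = 0}"
  define B where "B = K / (1 - C * p)"
  have bd: "x \<le> B" if "x \<in> S" for x
  proof -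
    have "0 \<le> K - (1 - C * p) * x" using Kp(3)[of x] that by (auto simp: S_def)
    thus ?thesis using Kp(2) by (simp add: B_def field_simps)
  qed
  have B0: "B \<ge> 0" using Kp by (simp add: B_def)
  define \<mu>1 where "\<mu>1 = max (m / C) (B + 1)"
  have m0: "m / C \<ge> 0" using m_nonneg C1 by simp
  have "clipG P C \<mu>1 \<le> K - (1 - C * p) * \<mu>1" using Kp(3)[of \<mu>1] B0 by (simp add: \<mu>1_def)
  also have "\<dots> \<le> K - (1 - C * p) * (B + 1)"
    using Kp(2) by (intro diff_left_mono mult_left_mono) (auto simp: \<mu>1_def)
  also have "\<dots> = - (1 - C * p)" using Kp(2) by (simp add: B_def field_simps)
  finally have g1: "clipG P C \<mu>1 \<le> 0" using Kp(2) by simp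
  have g0: "0 \<le> clipG P C (m / C)" using G_le_max[of 0] G0 by simp
  obtain x where x: "m / C \<le> x" "x \<le> \<mu>1" "clipG P C x = 0"
    using IVT2'[of "clipG P C" \<mu>1 0 "m / C", OF g1 g0 _ G_cont] by (auto simp: \<mu>1_def)
  have xS: "x \<in> S" using x m0 by (auto simp: S_def)
  have bddS: "bdd_above S" using bd by (auto simp: bdd_above_def)
  have "closed S" unfolding S_def by (rule continuous_closed_preimage_constant[OF G_cont]) simp
  hence SupS: "Sup S \<in> S" using closed_contains_Sup[of S] xS bddS by auto
  have "clipped_mean P C = Sup S"
    unfolding clipped_mean_def
  proof (rule Greatest_equality)
    show "0 \<le> Sup S \<and> clipG P C (Sup S) = 0" using SupS by (auto simp: S_def)
    show "y \<le> Sup S" if "0 \<le> y \<and> clipG P C y = 0" for y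
      using that by (intro cSup_upper bddS) (auto simp: S_def)
  qed
  moreover have "x \<le> Sup S" using xS bddS by (rule cSup_upper)
  ultimately show ?thesis using x SupS by (auto simp: S_def)
qed

lemma mean_le: "ennreal (clipped_mean P C) \<le> mean_ennreal P"
proof -
  define c where "c = clipped_mean P C"
  have c: "clipG P C c = 0" "c \<ge> 0" using cm by (auto simp: c_def)
  have "c = (\<integral>t. min t (C*c) \<partial>P)" using c by (simp add: clipG_def)
  hence "ennreal c = (\<integral>\<^sup>+ t. ennreal (min t (C*c)) \<partial>P)"
    using nn_integral_eq_integral[OF integ_min, of "C*c"] nn c C1 by (auto elim!: AE_mp)
  also have "\<dots> \<le> (\<integral>\<^sup>+ t. ennreal t \<partial>P)"
    by (rule nn_integral_mono) (auto intro: ennreal_leI)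
  finally show ?thesis by (simp add: c_def mean_ennreal_def)
qed

end

theorem mainTheorem15:
  fixes P :: "real measure" and C :: real
  assumes "C > 1"
    and "prob_space P"
    and "sets P = sets borel"
    and "AE t in P. t \<ge> 0"
  shows "continuous_on {0..} (clipG P C) \<and> concave_on {0..} (clipG P C)
    \<and> (SUP \<mu>\<in>{0..}. clipG P C \<mu>) = clipG P C (inv_C_median P C / C)
    \<and> inv_C_median P C / C \<le> clipped_mean P C
    \<and> ennreal (clipped_mean P C) \<le> mean_ennreal P"
proof -
  interpret clipctx P C
    by (rule clipctx.intro[OF assms(2)]) (unfold_locales, use assms in auto)
  show ?thesis using G_cont G_concave sup_eq cm mean_le by (simp add: m_eq)
qed

end
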